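(* Let $m,n\ge1$ be integers, $A=(a_{ij})$ an $n\times m$ real matrix and $q_{\max}>1$. The ILLL-algorithm on input $A,q_{\max}$ finds a sequence of $m$-tuples of integers $q_1,\dots,q_m$ such that for every real $Q$ with $2^{\frac{(m+n+3)(m+n)}{4m}}\le Q\le q_{\max}$ one of these $m$-tuples satisfies $$\max_j|q_j|\le Q\quad\text{and}\quad \max_i\|q_1a_{i1}+\dots+q_ma_{im}\|\le 2^{\frac{(m+n+3)(m+n)}{4n}}Q^{-\frac{m}{n}}.$$
   Context: $\|x\|$ denotes the distance from $x\in\mathbb R$ to the nearest integer. A basis $b_1,\dots,b_r$ of $\mathbb R^r$ with Gram–Schmidt vectors $b_i^*=b_i-\sum_{j<i}\mu_{ij}b_j^*$, $\mu_{ij}=(b_i,b_j^* )/(b_j^*,b_j^* )$, is reduced if $|\mu_{ij}|\le\frac12$ ($j<i$) and $|b_i^*+\mu_{i,i-1}b_{i-1}^*|^2\ge\frac34|b_{i-1}^*|^2$ ($1<i\le r$); the LLL-algorithm returns a reduced basis of the lattice generated by its input basis. The ILLL-algorithm: put $k'=\left\lceil -\frac{(m+n-1)(m+n)}{4n}+\frac{m\log_2 q_{\max}}{n}\right\rceil$ and, for $k\ge1$, $c(k)=\left(2^{-\frac{m+n+3}{4}-k+1}\right)^{\frac{m+n}{m}}$. Start with the basis given by the columns of $B=\begin{pmatrix} I_n & A\\ 0& c(1)I_m\end{pmatrix}$. In iteration $k=1,\dots,k'$: apply the LLL-algorithm to the current basis; from the first vector of the reduced basis, which has the form $(q_1a_{11}+\dots+q_ma_{1m}-p_1,\dots,q_1a_{n1}+\dots+q_ma_{nm}-p_n,c(k)q_1,\dots,c(k)q_m)^T$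 with $p_i,q_j\in\mathbb Z$, output the $m$-tuple $q(k)=(q_1,\dots,q_m)$; then divide the last $m$ coordinates of all basis vectors by $2^{\frac{m+n}{m}}$. The sequence found by the algorithm is $q(1),\dots,q(k')$. *)

theory Defs
  imports Complex_Main
begin

text \<open>Vectors of R^r are represented as functions nat => real, only coordinates k < r matter.
A family of r vectors (a basis) is b :: nat => nat => real, b i is the i-th vector (i < r),
b i k its k-th coordinate. Indices are 0-based.\<close>

definition ip :: "nat \<Rightarrow> (nat \<Rightarrow> real) \<Rightarrow> (nat \<Rightarrow> real) \<Rightarrow> real" where
  "ip r x y = (\<Sum>k<r. x k * y k)"

function gs :: "nat \<Rightarrow> (nat \<Rightarrow> nat \<Rightarrow> real) \<Rightarrow> nat \<Rightarrow> nat \<Rightarrow> real" where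
  "gs r b i = (\<lambda>k. b i k -
     (\<Sum>j\<in>{..<i}. (ip r (b i) (gs r b j) / ip r (gs r b j) (gs r b j)) * gs r b j k))"
  by auto
termination by (relation "measure (\<lambda>(r, b, i). i)") auto

definition gs_mu :: "nat \<Rightarrow> (nat \<Rightarrow> nat \<Rightarrow> real) \<Rightarrow> nat \<Rightarrow> nat \<Rightarrow> real" where
  "gs_mu r b i j = ip r (b i) (gs r b j) / ip r (gs r b j) (gs r b j)"

definition reduced :: "nat \<Rightarrow> (nat \<Rightarrow> nat \<Rightarrow> real) \<Rightarrow> bool" where
  "reduced r b \<longleftrightarrow>
     (\<forall>i<r. \<forall>j<i. \<bar>gs_mu r b i j\<bar> \<le> 1/2) \<and>
     (\<forall>i. 1 \<le> i \<and> i < r \<longrightarrow>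
        ip r (\<lambda>k. gs r b i k + gs_mu r b i (i-1) * gs r b (i-1) k)
             (\<lambda>k. gs r b i k + gs_mu r b i (i-1) * gs r b (i-1) k)
        \<ge> 3/4 * ip r (gs r b (i-1)) (gs r b (i-1)))"

definition in_lattice :: "nat \<Rightarrow> (nat \<Rightarrow> nat \<Rightarrow> real) \<Rightarrow> (nat \<Rightarrow> real) \<Rightarrow> bool" where
  "in_lattice r b v \<longleftrightarrow> (\<exists>c::nat \<Rightarrow> int. \<forall>k<r. v k = (\<Sum>i<r. of_int (c i) * b i k))"

definition same_lattice :: "nat \<Rightarrow> (nat \<Rightarrow> nat \<Rightarrow> real) \<Rightarrow> (nat \<Rightarrow> nat \<Rightarrow> real) \<Rightarrow> bool" where
  "same_lattice r b b' \<longleftrightarrow> (\<forall>i<r. in_lattice r b (b' i)) \<and> (\<forall>i<r. in_lattice r b' (b i))"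

text \<open>The specification of the LLL-algorithm: its output b' is a reduced basis of the
lattice generated by its input b.\<close>
definition LLL_output :: "nat \<Rightarrow> (nat \<Rightarrow> nat \<Rightarrow> real) \<Rightarrow> (nat \<Rightarrow> nat \<Rightarrow> real) \<Rightarrow> bool" where
  "LLL_output r b b' \<longleftrightarrow> reduced r b' \<and> same_lattice r b b'"

definition dist_int :: "real \<Rightarrow> real" where
  "dist_int x = min (x - of_int \<lfloor>x\<rfloor>) (of_int \<lceil>x\<rceil> - x)"

definition ILLL_c :: "nat \<Rightarrow> nat \<Rightarrow> nat \<Rightarrow> real" where
  "ILLL_c m n k = (2 powr (- (real m + real n + 3) / 4 - real k + 1)) powr ((real m + real n) / real m)"

definition ILLL_kmax :: "nat \<Rightarrow> nat \<Rightarrow> real \<Rightarrow> int" where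
  "ILLL_kmax m n qmax = \<lceil>- ((real m + real n - 1) * (real m + real n)) / (4 * real n)
                          + real m * log 2 qmax / real n\<rceil>"

text \<open>Initial basis: columns of [[I_n, A],[0, c(1) I_m]]; A i j is a_{ij} (i < n, j < m).\<close>
definition ILLL_B0 :: "nat \<Rightarrow> nat \<Rightarrow> (nat \<Rightarrow> nat \<Rightarrow> real) \<Rightarrow> nat \<Rightarrow> nat \<Rightarrow> real" where
  "ILLL_B0 m n A i k =
     (if i < n then (if k = i then 1 else 0)
      else if k < n then A k (i - n)
      else if k = i then ILLL_c m n 1 else 0)"

text \<open>A run of the ILLL-algorithm: C k is the basis before the LLL call in iteration k,
R k the reduced basis returned, q k the output m-tuple (with p k the corresponding p's).\<close>
definition ILLL_run :: "nat \<Rightarrow> nat \<Rightarrow> (nat \<Rightarrow> nat \<Rightarrow> real) \<Rightarrow> real \<Rightarrow>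
    (nat \<Rightarrow> nat \<Rightarrow> nat \<Rightarrow> real) \<Rightarrow> (nat \<Rightarrow> nat \<Rightarrow> nat \<Rightarrow> real) \<Rightarrow>
    (nat \<Rightarrow> nat \<Rightarrow> int) \<Rightarrow> (nat \<Rightarrow> nat \<Rightarrow> int) \<Rightarrow> bool" where
  "ILLL_run m n A qmax C R q p \<longleftrightarrow>
     (let r = m + n; K = ILLL_kmax m n qmax in
      (\<forall>i<r. \<forall>k<r. C 1 i k = ILLL_B0 m n A i k) \<and>
      (\<forall>k::nat. 1 \<le> k \<and> int k \<le> K \<longrightarrow>
          LLL_output r (C k) (R k) \<and>
          (\<forall>i<n. R k 0 i = (\<Sum>j<m. of_int (q k j) * A i j) - of_int (p k i)) \<and>
          (\<forall>j<m. R k 0 (n + j) = ILLL_c m n k * of_int (q k j)) \<and>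
          (\<forall>i<r. \<forall>l<r. C (k + 1) i l =
              (if l < n then R k i l else R k i l / 2 powr ((real m + real n) / real m)))))"

end

theory Submission
  imports Defs "Jordan_Normal_Form.Determinant"
begin

declare gs.simps[simp del]

lemma gs_eq: "gs r b i k = b i k - (\<Sum>j<i. gs_mu r b i j * gs r b j k)"
  by (subst gs.simps) (simp add: gs_mu_def)

lemma ip_sym: "ip r x y = ip r y x"
  unfolding ip_def by (simp add: mult.commute)

lemma ip_gs_left: "ip r (gs r b i) y = ip r (b i) y - (\<Sum>l<i. gs_mu r b i l * ip r (gs r b l) y)"
proof -
  have "ip r (gs r b i) y = (\<Sum>k<r. (b i k - (\<Sum>j<i. gs_mu r b i j * gs r b j k)) * y k)"
    unfolding ip_def by (simp add: gs_eq[of r b i])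
  also have "\<dots> = (\<Sum>k<r. b i k * y k) - (\<Sum>k<r. \<Sum>j<i. gs_mu r b i j * (gs r b j k * y k))"
    by (simp add: left_diff_distrib sum_subtractf sum_distrib_right mult.assoc)
  also have "\<dots> = ip r (b i) y - (\<Sum>l<i. gs_mu r b i l * ip r (gs r b l) y)"
    unfolding ip_def by (subst sum.swap) (simp add: sum_distrib_left)
  finally show ?thesis .
qed

lemma ip_self_zero: "ip r x x = 0 \<Longrightarrow> k < r \<Longrightarrow> x k = 0"
proof -
  assume a: "ip r x x = 0" "k < r"
  have "(\<Sum>k<r. x k * x k) = 0" using a by (simp add: ip_def)
  then have "\<forall>k\<in>{..<r}. x k * x k = 0"
    by (subst (asm) sum_nonneg_eq_0_iff) auto
  then show ?thesis using a by auto
qed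

lemma ip_zero_right: assumes "ip r x x = 0" shows "ip r y x = 0"
proof -
  have "\<forall>k\<in>{..<r}. y k * x k = 0" using ip_self_zero[OF assms] by auto
  then show ?thesis unfolding ip_def by (rule sum.neutral)
qed

lemma gs_orth: "j < i \<Longrightarrow> ip r (gs r b i) (gs r b j) = 0"
proof (induction i arbitrary: j rule: less_induct)
  case (less i)
  show ?case
  proof (cases "ip r (gs r b j) (gs r b j) = 0")
    case True
    then show ?thesis by (rule ip_zero_right)
  next
    case False
    have o: "ip r (gs r b l) (gs r b j) = 0" if "l < i" "l \<noteq> j" for l
    proof (cases "j < l")
      case True then show ?thesis using less.IH that by auto
    next
      case False
      then have "l < j" using that by auto
      then show ?thesis using less.IH[of j l] less.prems by (simp add: ip_sym)
    qed
    have "(\<Sum>l<i. gs_mu r b i l * ip r (gs r b l) (gs r b j))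
        = gs_mu r b i j * ip r (gs r b j) (gs r b j)"
      using less.prems o by (subst sum.remove[of _ j]) (auto intro!: sum.neutral)
    also have "\<dots> = ip r (b i) (gs r b j)" using False by (simp add: gs_mu_def)
    finally show ?thesis by (simp add: ip_gs_left[of r b i])
  qed
qed

lemma ip_nonneg: "0 \<le> ip r x x"
  unfolding ip_def by (auto intro: sum_nonneg)

lemma ip_expand: "ip r (\<lambda>k. x k + c * y k) (\<lambda>k. x k + c * y k)
      = ip r x x + 2 * c * ip r x y + c^2 * ip r y y"
  unfolding ip_def by (simp add: algebra_simps power2_eq_square sum.distrib sum_distrib_left)

lemma lovasz_step:
  assumes "reduced r b" "1 \<le> i" "i < r"
  shows "ip r (gs r b (i-1)) (gs r b (i-1)) \<le> 2 * ip r (gs r b i) (gs r b i)"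
proof -
  let ?g = "gs r b i" and ?h = "gs r b (i-1)" and ?mu = "gs_mu r b i (i-1)"
  have r1: "\<forall>i<r. \<forall>j<i. \<bar>gs_mu r b i j\<bar> \<le> 1/2" using assms(1) unfolding reduced_def by blast
  have mu: "\<bar>?mu\<bar> \<le> 1/2" using r1 assms(2,3) by simp
  have r2: "\<forall>i. 1 \<le> i \<and> i < r \<longrightarrow>
        ip r (\<lambda>k. gs r b i k + gs_mu r b i (i-1) * gs r b (i-1) k)
             (\<lambda>k. gs r b i k + gs_mu r b i (i-1) * gs r b (i-1) k)
        \<ge> 3/4 * ip r (gs r b (i-1)) (gs r b (i-1))" using assms(1) unfolding reduced_def by blast
  have lv: "ip r (\<lambda>k. ?g k + ?mu * ?h k) (\<lambda>k. ?g k + ?mu * ?h k) \<ge> 3/4 * ip r ?h ?h"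
    using r2 assms(2,3) by blast
  have orth: "ip r ?g ?h = 0" using gs_orth[of "i-1" i r b] assms by auto
  have "ip r (\<lambda>k. ?g k + ?mu * ?h k) (\<lambda>k. ?g k + ?mu * ?h k)
      = ip r ?g ?g + 2 * ?mu * ip r ?g ?h + ?mu^2 * ip r ?h ?h"
    by (rule ip_expand)
  with orth have e: "ip r (\<lambda>k. ?g k + ?mu * ?h k) (\<lambda>k. ?g k + ?mu * ?h k)
      = ip r ?g ?g + ?mu^2 * ip r ?h ?h" by simp
  have "?mu^2 \<le> 1/4"
  proof -
    have "?mu^2 = \<bar>?mu\<bar>^2" by simp
    also have "\<dots> \<le> (1/2)^2" by (rule power_mono[OF mu]) simp
    also have "(1/2::real)^2 = 1/4" by (simp add: power2_eq_square)
    finally show ?thesis .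
  qed
  then have "?mu^2 * ip r ?h ?h \<le> 1/4 * ip r ?h ?h"
    using ip_nonneg by (intro mult_right_mono) auto
  then show ?thesis using lv e by linarith
qed

lemma gs0: "gs r b 0 = b 0"
  by (rule ext) (simp add: gs_eq[of r b 0])

lemma chain: "reduced r b \<Longrightarrow> i < r \<Longrightarrow> ip r (b 0) (b 0) \<le> 2^i * ip r (gs r b i) (gs r b i)"
proof (induction i)
  case 0 then show ?case by (simp add: gs0)
next
  case (Suc i)
  have "ip r (b 0) (b 0) \<le> 2^i * ip r (gs r b i) (gs r b i)" using Suc by auto
  also have "\<dots> \<le> 2^i * (2 * ip r (gs r b (Suc i)) (gs r b (Suc i)))"
    using lovasz_step[of r b "Suc i"] Suc.prems by (intro mult_left_mono) auto
  finally show ?case by simp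
qed

lemma chain_prod: "reduced r b \<Longrightarrow> (ip r (b 0) (b 0))^r \<le> 2^(\<Sum>i<r. i) * (\<Prod>i<r. ip r (gs r b i) (gs r b i))"
proof -
  assume red: "reduced r b"
  have "(ip r (b 0) (b 0))^r = (\<Prod>i<r. ip r (b 0) (b 0))" by simp
  also have "\<dots> \<le> (\<Prod>i<r. 2^i * ip r (gs r b i) (gs r b i))"
    using chain[OF red] ip_nonneg by (intro prod_mono) auto
  also have "\<dots> = 2^(\<Sum>i<r. i) * (\<Prod>i<r. ip r (gs r b i) (gs r b i))"
    by (simp add: prod.distrib power_sum)
  finally show ?thesis .
qed

definition mj :: "nat \<Rightarrow> (nat \<Rightarrow> nat \<Rightarrow> real) \<Rightarrow> real mat" where
  "mj r b = mat r r (\<lambda>(i,l). b i l)"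

lemma mj_carrier[simp]: "mj r b \<in> carrier_mat r r" unfolding mj_def by simp

lemma prod_list_upt: "prod_list (map g [0..<r]) = (\<Prod>i<r. g i)"
proof -
  have "prod_list (map g [0..<r]) = prod g (set [0..<r])"
    by (rule prod.distinct_set_conv_list[symmetric]) simp
  then show ?thesis by (simp add: atLeast0LessThan)
qed

lemma prod_list_diag: "A \<in> carrier_mat r r \<Longrightarrow> prod_list (diag_mat A) = (\<Prod>i<r. A $$ (i,i))"
  unfolding diag_mat_def by (simp add: prod_list_upt)

definition Mu :: "nat \<Rightarrow> (nat \<Rightarrow> nat \<Rightarrow> real) \<Rightarrow> real mat" where
  "Mu r b = mat r r (\<lambda>(i,j). if j < i then gs_mu r b i j else if i = j then 1 else 0)"

lemma Mu_carrier[simp]: "Mu r b \<in> carrier_mat r r" unfolding Mu_def by simp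

lemma det_Mu: "det (Mu r b) = 1"
proof -
  have "det (Mu r b) = prod_list (diag_mat (Mu r b))"
    by (rule det_lower_triangular[of r]) (auto simp: Mu_def)
  also have "\<dots> = 1" by (simp only: prod_list_diag[OF Mu_carrier]) (simp add: Mu_def)
  finally show ?thesis .
qed

lemma mj_decomp: "mj r b = Mu r b * mj r (gs r b)"
proof (rule eq_matI)
  fix i l assume il: "i < dim_row (Mu r b * mj r (gs r b))" "l < dim_col (Mu r b * mj r (gs r b))"
  then have i: "i < r" and l: "l < r" by (auto simp: Mu_def mj_def)
  have "(Mu r b * mj r (gs r b)) $$ (i,l) =
     (\<Sum>j\<in>{0..<r}. (if j < i then gs_mu r b i j else if i = j then 1 else 0) * gs r b j l)"
    using i l by (simp add: Mu_def mj_def scalar_prod_def)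
  also have "\<dots> = (\<Sum>j\<in>{0..<r}. (if j < i then gs_mu r b i j * gs r b j l else 0))
       + (\<Sum>j\<in>{0..<r}. if i = j then gs r b i l else 0)"
    by (subst sum.distrib[symmetric]) (rule sum.cong, auto)
  also have "(\<Sum>j\<in>{0..<r}. (if j < i then gs_mu r b i j * gs r b j l else 0))
      = (\<Sum>j\<in>{..<i}. gs_mu r b i j * gs r b j l)"
    using i by (intro sum.mono_neutral_cong_right) auto
  also have "(\<Sum>j\<in>{0..<r}. if i = j then gs r b i l else 0) = gs r b i l" using i by simp
  finally have X: "(Mu r b * mj r (gs r b)) $$ (i,l) = (\<Sum>j<i. gs_mu r b i j * gs r b j l) + gs r b i l" .
  have Y: "mj r b $$ (i,l) = b i l" using i l by (simp add: mj_def)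
  have Z: "b i l = gs r b i l + (\<Sum>j<i. gs_mu r b i j * gs r b j l)" using gs_eq[of r b i l] by linarith
  show "mj r b $$ (i,l) = (Mu r b * mj r (gs r b)) $$ (i,l)" using X Y Z by linarith
qed (auto simp: mj_def Mu_def)

lemma det_gram: "(det (mj r b))^2 = (\<Prod>i<r. ip r (gs r b i) (gs r b i))"
proof -
  let ?G = "mj r (gs r b)"
  have G: "?G \<in> carrier_mat r r" by simp
  have d1: "det (mj r b) = det ?G"
    by (subst mj_decomp) (simp add: det_mult[OF Mu_carrier G] det_Mu)
  have P: "?G * transpose_mat ?G \<in> carrier_mat r r" using G by (metis mult_carrier_mat transpose_carrier_mat)
  have ent: "(?G * transpose_mat ?G) $$ (i,j) = ip r (gs r b i) (gs r b j)" if "i < r" "j < r" for i j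
    using that by (simp add: mj_def scalar_prod_def ip_def lessThan_atLeast0)
  have "det (?G * transpose_mat ?G) = prod_list (diag_mat (?G * transpose_mat ?G))"
  proof (rule det_upper_triangular[OF _ P])
    show "upper_triangular (?G * transpose_mat ?G)"
      unfolding upper_triangular_def using ent gs_orth by (auto simp: mj_def)
  qed
  also have "\<dots> = (\<Prod>i<r. ip r (gs r b i) (gs r b i))"
    by (simp add: prod_list_diag[OF P] ent)
  finally have "det (?G * transpose_mat ?G) = (\<Prod>i<r. ip r (gs r b i) (gs r b i))" .
  moreover have "det (?G * transpose_mat ?G) = (det ?G)^2"
    by (simp add: det_mult[OF G] det_transpose[OF G] power2_eq_square)
  ultimately show ?thesis using d1 by simp
qed

lemma mj_cong: "(\<forall>i<r. \<forall>k<r. b i k = b' i k) \<Longrightarrow> mj r b = mj r b'"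
  by (auto simp: mj_def intro!: eq_matI)

lemma lattice_mat:
  assumes "\<forall>i<r. in_lattice r b (b' i)"
  shows "\<exists>V::int mat. V \<in> carrier_mat r r \<and> mj r b' = map_mat of_int V * mj r b"
proof -
  have "\<forall>i. \<exists>c::nat\<Rightarrow>int. i < r \<longrightarrow> (\<forall>k<r. b' i k = (\<Sum>j<r. of_int (c j) * b j k))"
    using assms by (auto simp: in_lattice_def)
  then obtain cf where cf: "\<forall>i. i < r \<longrightarrow> (\<forall>k<r. b' i k = (\<Sum>j<r. of_int (cf i j) * b j k))"
    by (rule choice[THEN exE])
  let ?V = "mat r r (\<lambda>(i,j). cf i j)"
  have "mj r b' = map_mat of_int ?V * mj r b"
  proof (rule eq_matI)
    fix i k assume "i < dim_row (map_mat of_int ?V * mj r b)" "k < dim_col (map_mat of_int ?V * mj r b)"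
    then have i: "i < r" and k: "k < r" by (auto simp: mj_def)
    show "mj r b' $$ (i, k) = (map_mat of_int ?V * mj r b) $$ (i, k)"
      using i k cf by (simp add: mj_def scalar_prod_def atLeast0LessThan)
  qed (auto simp: mj_def)
  then show ?thesis by (intro exI[of _ ?V]) simp
qed

lemma det_le:
  assumes "same_lattice r b b'"
  shows "\<bar>det (mj r b')\<bar> \<le> \<bar>det (mj r b)\<bar>"
proof -
  obtain U :: "int mat" where U: "U \<in> carrier_mat r r" "mj r b' = map_mat of_int U * mj r b"
    using lattice_mat[of r b b'] assms unfolding same_lattice_def by blast
  obtain V :: "int mat" where V: "V \<in> carrier_mat r r" "mj r b = map_mat of_int V * mj r b'"
    using lattice_mat[of r b' b] assms unfolding same_lattice_def by blast
  have dU: "det (mj r b') = of_int (det U) * det (mj r b)"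
    using U by (simp add: det_mult[of _ r] of_int_hom.hom_det)
  have dV: "det (mj r b) = of_int (det V) * det (mj r b')"
    using V by (simp add: det_mult[of _ r] of_int_hom.hom_det)
  show ?thesis
  proof (cases "det (mj r b') = 0")
    case True then show ?thesis by simp
  next
    case False
    have "det V \<noteq> 0"
    proof
      assume "det V = 0"
      then have "det (mj r b) = 0" using dV by simp
      then show False using dU False by simp
    qed
    then have "1 \<le> \<bar>real_of_int (det V)\<bar>" by linarith
    then have "\<bar>det (mj r b')\<bar> \<le> \<bar>real_of_int (det V)\<bar> * \<bar>det (mj r b')\<bar>"
      by (simp add: mult_le_cancel_right1)
    also have "\<dots> = \<bar>det (mj r b)\<bar>" by (subst dV) (simp add: abs_mult)
    finally show ?thesis .
  qed
qed

lemma prod_split: "(\<Prod>i<n+m. if i<n then 1 else x) = (x::real)^m"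
  by (induction m) auto

definition Dm :: "nat \<Rightarrow> nat \<Rightarrow> real \<Rightarrow> real mat" where
  "Dm r n s = mat r r (\<lambda>(i,j). if i = j then (if i < n then 1 else 1/s) else 0)"

lemma Dm_carrier[simp]: "Dm r n s \<in> carrier_mat r r" by (simp add: Dm_def)
lemma Dm_dims[simp]: "dim_row (Dm r n s) = r" "dim_col (Dm r n s) = r" by (simp_all add: Dm_def)

lemma Dm_entry: "j < r \<Longrightarrow> l < r \<Longrightarrow> Dm r n s $$ (j,l) = (if j = l then (if l < n then 1 else 1/s) else 0)"
  by (simp add: Dm_def)

lemma det_scale:
  assumes "\<forall>i<r. \<forall>l<r. c i l = (if l < n then b i l else b i l / s)" and r: "r = n + m"
  shows "det (mj r c) = det (mj r b) * (1/s)^m"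
proof -
  let ?d = "\<lambda>l. if l < n then 1 else 1/s"
  let ?D = "Dm r n s"
  have D: "?D \<in> carrier_mat r r" by simp
  have "mj r c = mj r b * ?D"
  proof (rule eq_matI)
    fix i l assume "i < dim_row (mj r b * ?D)" "l < dim_col (mj r b * ?D)"
    then have i: "i < r" and l: "l < r" by (auto simp: mj_def Dm_def)
    have "(mj r b * ?D) $$ (i,l) = (\<Sum>j\<in>{0..<r}. b i j * ?D $$ (j,l))"
      using i l by (simp add: mj_def scalar_prod_def)
    also have "\<dots> = (\<Sum>j\<in>{0..<r}. if j = l then b i l * ?d l else 0)"
      using l by (intro sum.cong) (auto simp: Dm_entry)
    also have "\<dots> = b i l * ?d l" using l by simp
    finally show "mj r c $$ (i,l) = (mj r b * ?D) $$ (i,l)"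
      using i l assms(1) by (simp add: mj_def)
  qed (auto simp: mj_def Dm_def)
  then have "det (mj r c) = det (mj r b) * det ?D" using D by (simp add: det_mult[of _ r])
  moreover have "det ?D = (1/s)^m"
  proof -
    have "det ?D = prod_list (diag_mat ?D)"
      by (rule det_upper_triangular[OF _ D]) (auto simp: upper_triangular_def Dm_def)
    also have "\<dots> = (\<Prod>i<r. ?d i)" by (simp only: prod_list_diag[OF D]) (simp add: Dm_entry)
    also have "\<dots> = (1/s)^m" unfolding r by (rule prod_split)
    finally show ?thesis .
  qed
  ultimately show ?thesis by simp
qed

lemma det_B0: "det (mj (m+n) (ILLL_B0 m n A)) = (ILLL_c m n 1)^m"
proof -
  let ?B = "mj (m+n) (ILLL_B0 m n A)"
  have B: "?B \<in> carrier_mat (m+n) (m+n)" by simp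
  have "det ?B = prod_list (diag_mat ?B)"
    by (rule det_lower_triangular[OF _ B]) (auto simp: mj_def ILLL_B0_def)
  also have "\<dots> = (\<Prod>i<m+n. ?B $$ (i,i))" by (rule prod_list_diag[OF B])
  also have "\<dots> = (\<Prod>i<m+n. if i < n then 1 else ILLL_c m n 1)"
    by (rule prod.cong) (auto simp: mj_def ILLL_B0_def)
  also have "\<dots> = (ILLL_c m n 1)^m" using prod_split[where x="ILLL_c m n 1" and n=n and m=m] by (simp add: add.commute)
  finally show ?thesis .
qed


lemma coord_le: "l < r \<Longrightarrow> (x l)^2 \<le> ip r x x"
proof -
  assume l: "l < r"
  have "x l * x l \<le> (\<Sum>k<r. x k * x k)"
    using l by (intro member_le_sum) auto
  then show ?thesis by (simp add: ip_def power2_eq_square)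
qed

lemma dist_int_le: "dist_int x \<le> \<bar>x - of_int p\<bar>"
proof (cases "of_int p \<le> x")
  case True
  then have "p \<le> \<lfloor>x\<rfloor>" by (simp add: le_floor_iff)
  then have "x - of_int \<lfloor>x\<rfloor> \<le> x - of_int p" by simp
  then show ?thesis using True unfolding dist_int_def by linarith
next
  case False
  then have "\<lceil>x\<rceil> \<le> p" by (simp add: ceiling_le_iff)
  then have "of_int \<lceil>x\<rceil> - x \<le> of_int p - x" by simp
  then show ?thesis using False unfolding dist_int_def by linarith
qed

lemma gauss2: "(\<Sum>i<r. i) * 2 = r * (r - 1::nat)"
proof (induction r)
  case 0 then show ?case by simp
next
  case (Suc r)
  have "(\<Sum>i<Suc r. i) * 2 = (\<Sum>i<r. i) * 2 + 2 * r" by simp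
  also have "\<dots> = r * (r - 1) + 2 * r" using Suc by simp
  also have "\<dots> = Suc r * (Suc r - 1)" by (cases r) (auto simp: algebra_simps)
  finally show ?case .
qed

lemma alg1: fixes m n k L :: real assumes "m>0" "n>0" "k \<le> m*L/n - (m+n-1)*(m+n)/(4*n)"
  shows "-k - (-(m+n+3)/4 - k + 1)*((m+n)/m) \<le> L"
proof -
  have e: "-k - (-(m+n+3)/4 - k + 1)*((m+n)/m) = (k*n + (m+n-1)*(m+n)/4)/m"
    using assms by (simp add: field_simps)
  have e2: "m*L/n - (m+n-1)*(m+n)/(4*n) = (m*L - (m+n-1)*(m+n)/4)/n"
    using assms by (simp add: field_simps)
  have "k*n \<le> m*L - (m+n-1)*(m+n)/4" using assms(3) e2 assms(2) by (simp add: pos_le_divide_eq)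
  then have "(k*n + (m+n-1)*(m+n)/4)/m \<le> (m*L)/m" using assms(1) by (intro divide_right_mono) auto
  then show ?thesis using e assms(1) by simp
qed

lemma alg2: fixes m n k L :: real assumes "m>0" "n>0" "m*L/n - (m+n-1)*(m+n)/(4*n) < k + 1"
  shows "-k \<le> (m+n+3)*(m+n)/(4*n) + L * (-m/n)"
proof -
  have e: "(m+n+3)*(m+n)/(4*n) + L * (-m/n) = (m+n-1)*(m+n)/(4*n) + (m+n)/n - m*L/n"
    using assms by (simp add: field_simps)
  have "1 \<le> (m+n)/n" using assms by simp
  then show ?thesis using e assms(3) by linarith
qed

lemma alg3: fixes m n L :: real assumes "m>0" "n>0" "(m+n+3)*(m+n)/(4*m) \<le> L"
  shows "1 \<le> m*L/n - (m+n-1)*(m+n)/(4*n)"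
proof -
  have "(m+n+3)*(m+n)/4 \<le> m*L" using assms by (simp add: pos_divide_le_eq mult.commute)
  moreover have "(m+n+3)*(m+n)/4 = (m+n-1)*(m+n)/4 + (m+n)" by (simp add: field_simps)
  ultimately have "n \<le> m*L - (m+n-1)*(m+n)/4" using assms by linarith
  then have "1 \<le> (m*L - (m+n-1)*(m+n)/4)/n" using assms by (simp add: pos_le_divide_eq)
  moreover have "m*L/n - (m+n-1)*(m+n)/(4*n) = (m*L - (m+n-1)*(m+n)/4)/n"
    using assms by (simp add: field_simps)
  ultimately show ?thesis by simp
qed

lemma alg4: fixes r k :: real
  shows "r*(r-1)/2 + 2*((-(r+3)/4 - k + 1) * r) = r * (-2*k)"
  by (simp add: field_simps)


theorem theorem2:
  fixes m n :: nat and A :: "nat \<Rightarrow> nat \<Rightarrow> real" and qmax :: real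
    and C R :: "nat \<Rightarrow> nat \<Rightarrow> nat \<Rightarrow> real" and q p :: "nat \<Rightarrow> nat \<Rightarrow> int"
  assumes "m \<ge> 1" and "n \<ge> 1" and "qmax > 1"
    and "ILLL_run m n A qmax C R q p"
  shows "\<forall>Q::real.
           2 powr ((real m + real n + 3) * (real m + real n) / (4 * real m)) \<le> Q \<and> Q \<le> qmax \<longrightarrow>
           (\<exists>k::nat. 1 \<le> k \<and> int k \<le> ILLL_kmax m n qmax \<and>
              (\<forall>j<m. \<bar>real_of_int (q k j)\<bar> \<le> Q) \<and>
              (\<forall>i<n. dist_int (\<Sum>j<m. of_int (q k j) * A i j)
                 \<le> 2 powr ((real m + real n + 3) * (real m + real n) / (4 * real n))
                   * Q powr (- real m / real n)))"
proof -
  define r where "r = m + n"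
  define K where "K = ILLL_kmax m n qmax"
  define ex where "ex k = - (real m + real n + 3) / 4 - real k + 1" for k :: nat
  have mpos: "real m > 0" and npos: "real n > 0" using assms by auto
  have rr: "real r = real m + real n" by (simp add: r_def)
  have run1: "\<forall>i<r. \<forall>k<r. C 1 i k = ILLL_B0 m n A i k"
    using assms(4) unfolding ILLL_run_def Let_def r_def by blast
  have run2: "LLL_output r (C k) (R k) \<and>
          (\<forall>i<n. R k 0 i = (\<Sum>j<m. of_int (q k j) * A i j) - of_int (p k i)) \<and>
          (\<forall>j<m. R k 0 (n + j) = ILLL_c m n k * of_int (q k j)) \<and>
          (\<forall>i<r. \<forall>l<r. C (k + 1) i l =
              (if l < n then R k i l else R k i l / 2 powr ((real m + real n) / real m)))"
    if "1 \<le> k" "int k \<le> K" for k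
    using assms(4) that unfolding ILLL_run_def Let_def r_def K_def by blast
  have cpow: "ILLL_c m n k = 2 powr (ex k * ((real m + real n) / real m))" for k
    by (simp add: ILLL_c_def ex_def powr_powr)
  have cpos: "ILLL_c m n k > 0" for k by (simp add: cpow)
  have cm: "(ILLL_c m n k)^m = 2 powr (ex k * real r)" for k
  proof -
    have "(ILLL_c m n k)^m = 2 powr (real m * (ex k * ((real m + real n) / real m)))"
      by (simp add: cpow powr_power)
    also have "real m * (ex k * ((real m + real n) / real m)) = ex k * real r"
      using mpos rr by (simp add: field_simps)
    finally show ?thesis .
  qed
  have detC: "\<bar>det (mj r (C k))\<bar> \<le> 2 powr (ex k * real r)" if "1 \<le> k" "int k \<le> K" for k
    using that
  proof (induction k)
    case 0 then show ?case by simp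
  next
    case (Suc k)
    show ?case
    proof (cases "k = 0")
      case True
      have "mj r (C 1) = mj r (ILLL_B0 m n A)" by (rule mj_cong[OF run1])
      then have "det (mj r (C 1)) = 2 powr (ex 1 * real r)"
        using det_B0[of m n A] cm[of 1] by (simp add: r_def)
      then show ?thesis using True by simp
    next
      case False
      then have k1: "1 \<le> k" and kK: "int k \<le> K" using Suc.prems by auto
      have IH: "\<bar>det (mj r (C k))\<bar> \<le> 2 powr (ex k * real r)" using Suc.IH k1 kK by blast
      note rk = run2[OF k1 kK]
      have sl: "same_lattice r (C k) (R k)" using rk unfolding LLL_output_def by blast
      have dl: "\<bar>det (mj r (R k))\<bar> \<le> \<bar>det (mj r (C k))\<bar>" by (rule det_le[OF sl])
      define s where "s = (2::real) powr ((real m + real n) / real m)"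
      have sc: "\<forall>i<r. \<forall>l<r. C (Suc k) i l = (if l < n then R k i l else R k i l / s)"
        using rk unfolding s_def by simp
      have dC: "det (mj r (C (Suc k))) = det (mj r (R k)) * (1/s)^m"
        by (rule det_scale[OF sc]) (simp add: r_def)
      have sm: "(1/s)^m = 2 powr (- real r)"
      proof -
        have "s^m = 2 powr (real m * ((real m + real n) / real m))"
          by (simp add: s_def powr_power)
        also have "\<dots> = 2 powr real r" using mpos rr by simp
        finally have "s^m = 2 powr real r" .
        then show ?thesis by (simp add: power_one_over powr_minus_divide)
      qed
      have "\<bar>det (mj r (C (Suc k)))\<bar> = \<bar>det (mj r (R k))\<bar> * 2 powr (- real r)"
        by (simp add: dC sm abs_mult)
      also have "\<dots> \<le> 2 powr (ex k * real r) * 2 powr (- real r)"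
        using dl IH by (intro mult_right_mono) auto
      also have "\<dots> = 2 powr (ex (Suc k) * real r)"
        by (simp add: powr_add[symmetric] ex_def algebra_simps)
      finally show ?thesis .
    qed
  qed
  have r2: "r \<ge> 2" using assms by (simp add: r_def)
  have ipb: "ip r (R k 0) (R k 0) \<le> 2 powr (- 2 * real k)" if k1: "1 \<le> k" and kK: "int k \<le> K" for k
  proof -
    note rk = run2[OF k1 kK]
    have red: "reduced r (R k)" and sl: "same_lattice r (C k) (R k)"
      using rk unfolding LLL_output_def by blast+
    have dl: "\<bar>det (mj r (R k))\<bar> \<le> \<bar>det (mj r (C k))\<bar>" by (rule det_le[OF sl])
    have g: "real (\<Sum>i<r. i) = real r * (real r - 1) / 2"
    proof -
      have "real ((\<Sum>i<r. i) * 2) = real (r * (r - 1))" by (simp only: gauss2)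
      then show ?thesis using r2 by (simp add: of_nat_diff)
    qed
    have "(ip r (R k 0) (R k 0))^r \<le> 2^(\<Sum>i<r. i) * (\<Prod>i<r. ip r (gs r (R k) i) (gs r (R k) i))"
      by (rule chain_prod[OF red])
    also have "\<dots> = 2^(\<Sum>i<r. i) * (det (mj r (R k)))^2" by (simp add: det_gram)
    also have "\<dots> \<le> 2^(\<Sum>i<r. i) * (2 powr (ex k * real r))^2"
    proof -
      have "\<bar>det (mj r (R k))\<bar> \<le> 2 powr (ex k * real r)" using dl detC[OF k1 kK] by linarith
      then have "\<bar>det (mj r (R k))\<bar>^2 \<le> (2 powr (ex k * real r))^2"
        by (rule power_mono) simp
      then have "(det (mj r (R k)))^2 \<le> (2 powr (ex k * real r))^2" by (simp only: power2_abs)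
      then show ?thesis by (rule mult_left_mono) simp
    qed
    also have "\<dots> = 2 powr (real (\<Sum>i<r. i) + 2 * (ex k * real r))"
    proof -
      have a: "(2::real)^(\<Sum>i<r. i) = 2 powr (real (\<Sum>i<r. i))" by (rule powr_realpow[symmetric]) simp
      have b: "(2 powr (ex k * real r))^2 = (2::real) powr (2 * (ex k * real r))"
        by (subst powr_power) simp_all
      show ?thesis unfolding a b by (rule powr_add[symmetric])
    qed
    also have "real (\<Sum>i<r. i) + 2 * (ex k * real r) = real r * (-2 * real k)"
      unfolding g ex_def rr[symmetric] using alg4[of "real r" "real k"] by (simp add: rr)
    also have "2 powr (real r * (-2 * real k)) = (2 powr (- 2 * real k))^r"
      by (simp add: powr_power)
    finally have le: "(ip r (R k 0) (R k 0))^(Suc (r-1)) \<le> (2 powr (- 2 * real k))^(Suc (r-1))"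
      using r2 by simp
    show ?thesis by (rule power_le_imp_le_base[OF le]) simp
  qed
  have vb: "\<bar>R k 0 l\<bar> \<le> 2 powr (- real k)" if k1: "1 \<le> k" and kK: "int k \<le> K" and l: "l < r" for k l
  proof -
    have "\<bar>R k 0 l\<bar>^2 \<le> ip r (R k 0) (R k 0)" using coord_le[OF l] by simp
    also have "\<dots> \<le> 2 powr (- 2 * real k)" by (rule ipb[OF k1 kK])
    also have "\<dots> = (2 powr (- real k))^2" by (simp add: powr_power)
    finally show ?thesis by (rule power2_le_imp_le) simp
  qed
  show ?thesis
  proof (intro allI impI)
    fix Q :: real
    assume hQ: "2 powr ((real m + real n + 3) * (real m + real n) / (4 * real m)) \<le> Q \<and> Q \<le> qmax"
    have "(0::real) < 2 powr ((real m + real n + 3) * (real m + real n) / (4 * real m))" by simp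
    then have Qpos: "Q > 0" using hQ by linarith
    define L where "L = log 2 Q"
    have QL: "Q = 2 powr L" using Qpos by (simp add: L_def)
    have L1: "(real m + real n + 3) * (real m + real n) / (4 * real m) \<le> L"
      using hQ Qpos unfolding L_def by (simp add: le_log_iff)
    have L2: "L \<le> log 2 qmax" using hQ Qpos unfolding L_def by simp
    define t where "t = real m * L / real n - (real m + real n - 1) * (real m + real n) / (4 * real n)"
    have t1: "1 \<le> t" unfolding t_def by (rule alg3[OF mpos npos L1])
    define k where "k = nat \<lfloor>t\<rfloor>"
    have kt: "real k \<le> t" "t < real k + 1" using t1 unfolding k_def by linarith+
    have k1: "1 \<le> k" using t1 unfolding k_def by linarith
    have kK: "int k \<le> K"
    proof -
      have "t \<le> - ((real m + real n - 1) * (real m + real n)) / (4 * real n) + real m * log 2 qmax / real n"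
        unfolding t_def using L2 mpos npos by (simp add: divide_right_mono field_simps)
      then have "real k \<le> of_int K" using kt
        unfolding K_def ILLL_kmax_def by (meson le_of_int_ceiling order_trans)
      then show ?thesis by linarith
    qed
    show "\<exists>k::nat. 1 \<le> k \<and> int k \<le> ILLL_kmax m n qmax \<and>
              (\<forall>j<m. \<bar>real_of_int (q k j)\<bar> \<le> Q) \<and>
              (\<forall>i<n. dist_int (\<Sum>j<m. of_int (q k j) * A i j)
                 \<le> 2 powr ((real m + real n + 3) * (real m + real n) / (4 * real n))
                   * Q powr (- real m / real n))"
    proof (intro exI[of _ k] conjI allI impI)
      show "1 \<le> k" by (rule k1)
      show "int k \<le> ILLL_kmax m n qmax" using kK by (simp add: K_def)
      note rk = run2[OF k1 kK]
      fix j assume j: "j < m"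
      have "\<bar>R k 0 (n + j)\<bar> \<le> 2 powr (- real k)" using vb[OF k1 kK, of "n+j"] j by (simp add: r_def)
      then have "ILLL_c m n k * \<bar>real_of_int (q k j)\<bar> \<le> 2 powr (- real k)"
        using rk j cpos[of k] by (simp add: abs_mult)
      then have "\<bar>real_of_int (q k j)\<bar> \<le> 2 powr (- real k) / ILLL_c m n k"
        using cpos[of k] by (simp add: pos_le_divide_eq mult.commute)
      also have "\<dots> = 2 powr (- real k - ex k * ((real m + real n) / real m))"
        by (simp add: cpow powr_diff)
      also have "\<dots> \<le> 2 powr L"
        using alg1[OF mpos npos, of "real k" L] kt unfolding t_def ex_def by simp
      finally show "\<bar>real_of_int (q k j)\<bar> \<le> Q" using QL by simp
    next
      note rk = run2[OF k1 kK]
      fix i assume i: "i < n"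
      have "dist_int (\<Sum>j<m. of_int (q k j) * A i j) \<le> \<bar>(\<Sum>j<m. of_int (q k j) * A i j) - of_int (p k i)\<bar>"
        by (rule dist_int_le)
      also have "\<dots> = \<bar>R k 0 i\<bar>" using rk i by simp
      also have "\<dots> \<le> 2 powr (- real k)" using vb[OF k1 kK, of i] i by (simp add: r_def)
      also have "\<dots> \<le> 2 powr ((real m + real n + 3) * (real m + real n) / (4 * real n) + L * (- real m / real n))"
        using alg2[OF mpos npos, of L "real k"] kt unfolding t_def by simp
      also have "\<dots> = 2 powr ((real m + real n + 3) * (real m + real n) / (4 * real n))
                   * Q powr (- real m / real n)"
        by (simp only: QL powr_powr powr_add)
      finally show "dist_int (\<Sum>j<m. of_int (q k j) * A i j)
                 \<le> 2 powr ((real m + real n + 3) * (real m + real n) / (4 * real n))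
                   * Q powr (- real m / real n)" .
    qed
  qed
qed

end
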